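(* Let $(T,f,(\le_h))$ be an ordered merge tree and let $\sqsubseteq_L$ be the relation on $L(T)$ given by $u_1\sqsubseteq_L u_2$ iff $\mathrm{anc}_h(u_1)\le_h\mathrm{anc}_h(u_2)$ with $h=\max(f(u_1),f(u_2))$. Then $\sqsubseteq_L$ separates subtrees: for all leaves $u,u_1,u_2\in L(T)$ with $u_1\sqsubseteq_L u\sqsubseteq_L u_2$, we have $u\in T_{\mathrm{lca}(u_1,u_2)}$.
   Context: A merge tree $(T,f)$: a finite rooted tree $T$ identified with its topological realisation, with a continuous $f\colon T\to\mathbb{R}\cup\{\infty\}$ strictly increasing towards the root, $f(v)=\infty$ iff $v$ is the root; lowest leaf at height $0$; $L(T)$ is the set of leaves. $x_1\preceq x_2$ iff there is an $f$-increasing path from $x_1$ to $x_2$; $T_x$ is the subtree of descendants of $x$; $\mathrm{lca}$ is the lowest common ancestor; $\mathrm{anc}_h(x)$ is the unique ancestor of $x$ at height $h\ge f(x)$; $\mathbb{L}_h=\{x:f(x)=h\}$. A layer-order is a family $(\le_h)_{h\ge0}$ of total orders on the $\mathbb{L}_h$ that is consistent: for $h_1\le h_2$ and $x_1,x_2\in\mathbb{L}_{h_1}$, $x_1\le_{h_1}x_2$ implies $\mathrm{anc}_{h_2}(x_1)\le_{h_2}\mathrm{anc}_{h_2}(x_2)$. An ordered merge tree is $(T,f,(\le_h))$. *)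

theory Defs
  imports "HOL-Analysis.Analysis"
begin

text \<open>A finite rooted tree is given combinatorially by a finite vertex set V, a root r and a
parent map par (with the convention par r = r).  The topological realisation of the tree is encoded by
points (v, h): a non-root vertex v together with a height h on the edge from v to par v,
f v \<le> h < f (par v); the root itself is the point (r, \<infinity>).  The height function on the
realisation is snd (linear along edges, hence continuous and strictly increasing).\<close>

definition vanc :: "('v \<Rightarrow> 'v) \<Rightarrow> 'v \<Rightarrow> 'v \<Rightarrow> bool" where
  "vanc par v w \<longleftrightarrow> (\<exists>n. (par ^^ n) v = w)"

definition is_leaf :: "'v set \<Rightarrow> 'v \<Rightarrow> ('v \<Rightarrow> 'v) \<Rightarrow> 'v \<Rightarrow> bool" where
  "is_leaf V r par v \<longleftrightarrow> v \<in> V \<and> \<not> (\<exists>w\<in>V. w \<noteq> r \<and> par w = v)"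

definition merge_tree :: "'v set \<Rightarrow> 'v \<Rightarrow> ('v \<Rightarrow> 'v) \<Rightarrow> ('v \<Rightarrow> ereal) \<Rightarrow> bool" where
  "merge_tree V r par f \<longleftrightarrow>
     finite V \<and> r \<in> V \<and> par r = r \<and> (\<forall>v\<in>V. par v \<in> V) \<and>
     (\<forall>v\<in>V. \<exists>n. (par ^^ n) v = r) \<and>
     (\<forall>v\<in>V. f v = \<infinity> \<longleftrightarrow> v = r) \<and>
     (\<forall>v\<in>V - {r}. f v < f (par v)) \<and>
     (\<forall>v. is_leaf V r par v \<longrightarrow> 0 \<le> f v) \<and>
     (\<exists>v. is_leaf V r par v \<and> f v = 0)"

definition mt_points :: "'v set \<Rightarrow> 'v \<Rightarrow> ('v \<Rightarrow> 'v) \<Rightarrow> ('v \<Rightarrow> ereal) \<Rightarrow> ('v \<times> ereal) set" where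
  "mt_points V r par f = {(v, h). v \<in> V - {r} \<and> f v \<le> h \<and> h < f (par v)} \<union> {(r, \<infinity>)}"

text \<open>x \<preceq> y: there is an f-increasing path from x to y.\<close>
definition mt_le :: "('v \<Rightarrow> 'v) \<Rightarrow> 'v \<times> ereal \<Rightarrow> 'v \<times> ereal \<Rightarrow> bool" where
  "mt_le par x y \<longleftrightarrow> vanc par (fst x) (fst y) \<and> snd x \<le> snd y"

definition mt_leaves :: "'v set \<Rightarrow> 'v \<Rightarrow> ('v \<Rightarrow> 'v) \<Rightarrow> ('v \<Rightarrow> ereal) \<Rightarrow> ('v \<times> ereal) set" where
  "mt_leaves V r par f = {(v, f v) | v. is_leaf V r par v}"

definition mt_layer :: "'v set \<Rightarrow> 'v \<Rightarrow> ('v \<Rightarrow> 'v) \<Rightarrow> ('v \<Rightarrow> ereal) \<Rightarrow> ereal \<Rightarrow> ('v \<times> ereal) set" where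
  "mt_layer V r par f h = {x \<in> mt_points V r par f. snd x = h}"

definition mt_anc :: "'v set \<Rightarrow> 'v \<Rightarrow> ('v \<Rightarrow> 'v) \<Rightarrow> ('v \<Rightarrow> ereal) \<Rightarrow> ereal \<Rightarrow> 'v \<times> ereal \<Rightarrow> 'v \<times> ereal" where
  "mt_anc V r par f h x = (THE y. y \<in> mt_points V r par f \<and> mt_le par x y \<and> snd y = h)"

definition mt_subtree :: "'v set \<Rightarrow> 'v \<Rightarrow> ('v \<Rightarrow> 'v) \<Rightarrow> ('v \<Rightarrow> ereal) \<Rightarrow> 'v \<times> ereal \<Rightarrow> ('v \<times> ereal) set" where
  "mt_subtree V r par f x = {y \<in> mt_points V r par f. mt_le par y x}"

definition mt_lca :: "'v set \<Rightarrow> 'v \<Rightarrow> ('v \<Rightarrow> 'v) \<Rightarrow> ('v \<Rightarrow> ereal) \<Rightarrow> 'v \<times> ereal \<Rightarrow> 'v \<times> ereal \<Rightarrow> 'v \<times> ereal" where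
  "mt_lca V r par f x y = (THE z. z \<in> mt_points V r par f \<and> mt_le par x z \<and> mt_le par y z \<and>
      (\<forall>z'\<in>mt_points V r par f. mt_le par x z' \<and> mt_le par y z' \<longrightarrow> mt_le par z z'))"

definition total_order_on :: "'a set \<Rightarrow> ('a \<Rightarrow> 'a \<Rightarrow> bool) \<Rightarrow> bool" where
  "total_order_on A R \<longleftrightarrow>
     (\<forall>x\<in>A. R x x) \<and>
     (\<forall>x\<in>A. \<forall>y\<in>A. R x y \<and> R y x \<longrightarrow> x = y) \<and>
     (\<forall>x\<in>A. \<forall>y\<in>A. \<forall>z\<in>A. R x y \<and> R y z \<longrightarrow> R x z) \<and>
     (\<forall>x\<in>A. \<forall>y\<in>A. R x y \<or> R y x)"

definition layer_order :: "'v set \<Rightarrow> 'v \<Rightarrow> ('v \<Rightarrow> 'v) \<Rightarrow> ('v \<Rightarrow> ereal) \<Rightarrow>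
    (real \<Rightarrow> 'v \<times> ereal \<Rightarrow> 'v \<times> ereal \<Rightarrow> bool) \<Rightarrow> bool" where
  "layer_order V r par f ord \<longleftrightarrow>
     (\<forall>h. 0 \<le> h \<longrightarrow> total_order_on (mt_layer V r par f (ereal h)) (ord h)) \<and>
     (\<forall>h1 h2 x1 x2. 0 \<le> h1 \<longrightarrow> h1 \<le> h2 \<longrightarrow>
        x1 \<in> mt_layer V r par f (ereal h1) \<longrightarrow> x2 \<in> mt_layer V r par f (ereal h1) \<longrightarrow>
        ord h1 x1 x2 \<longrightarrow>
        ord h2 (mt_anc V r par f (ereal h2) x1) (mt_anc V r par f (ereal h2) x2))"

definition leaf_rel :: "'v set \<Rightarrow> 'v \<Rightarrow> ('v \<Rightarrow> 'v) \<Rightarrow> ('v \<Rightarrow> ereal) \<Rightarrow>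
    (real \<Rightarrow> 'v \<times> ereal \<Rightarrow> 'v \<times> ereal \<Rightarrow> bool) \<Rightarrow> 'v \<times> ereal \<Rightarrow> 'v \<times> ereal \<Rightarrow> bool" where
  "leaf_rel V r par f ord u1 u2 \<longleftrightarrow>
     (let h = max (snd u1) (snd u2)
      in ord (real_of_ereal h) (mt_anc V r par f h u1) (mt_anc V r par f h u2))"

end

theory Submission
  imports Defs
begin

lemma mt_basic:
  assumes "merge_tree V r par f"
  shows "finite V" "r \<in> V" "par r = r" "\<And>v. v \<in> V \<Longrightarrow> par v \<in> V"
    "\<And>v. v \<in> V \<Longrightarrow> \<exists>n. (par ^^ n) v = r"
    "\<And>v. v \<in> V \<Longrightarrow> f v = \<infinity> \<longleftrightarrow> v = r"
    "\<And>v. v \<in> V \<Longrightarrow> v \<noteq> r \<Longrightarrow> f v < f (par v)"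
    "\<And>v. is_leaf V r par v \<Longrightarrow> 0 \<le> f v"
  using assms unfolding merge_tree_def by auto

lemma funpow_in:
  assumes "merge_tree V r par f" "v \<in> V" shows "(par ^^ n) v \<in> V"
  by (induction n) (auto simp: mt_basic[OF assms(1)] assms(2))

lemma funpow_r:
  assumes "merge_tree V r par f" shows "(par ^^ n) r = r"
  by (induction n) (auto simp: mt_basic[OF assms(1)])

lemma f_mono:
  assumes "merge_tree V r par f" "v \<in> V" shows "f v \<le> f ((par ^^ n) v)"
proof (induction n)
  case 0 then show ?case by simp
next
  case (Suc n)
  have w: "(par ^^ n) v \<in> V" using funpow_in[OF assms] .
  have "f ((par ^^ n) v) \<le> f (par ((par ^^ n) v))"
  proof (cases "(par ^^ n) v = r")
    case True then show ?thesis using mt_basic(3)[OF assms(1)] by simp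
  next
    case False then show ?thesis using mt_basic(7)[OF assms(1) w] by simp
  qed
  then show ?case using Suc by simp
qed

lemma f_par_le:
  assumes "merge_tree V r par f" "v \<in> V" "k > 0"
  shows "f (par v) \<le> f ((par ^^ k) v)"
proof -
  obtain m where k: "k = Suc m" using assms(3) by (cases k) auto
  have "(par ^^ k) v = (par ^^ m) (par v)" by (simp add: k funpow_swap1)
  then show ?thesis using f_mono[OF assms(1) mt_basic(4)[OF assms(1) assms(2)]] by simp
qed

lemma pts:
  assumes "merge_tree V r par f" "y \<in> mt_points V r par f"
  shows "fst y \<in> V" "fst y = r \<Longrightarrow> snd y = \<infinity>"
    "fst y \<noteq> r \<Longrightarrow> f (fst y) \<le> snd y" "fst y \<noteq> r \<Longrightarrow> snd y < f (par (fst y))"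
  using assms(2) mt_basic(2)[OF assms(1)] unfolding mt_points_def by (cases y, auto)+

lemma funpow_comp: "(g ^^ m) ((g ^^ n) a) = (g ^^ (m + n)) a"
  by (simp only: funpow_add comp_apply)

lemma vanc_trans: "vanc par a b \<Longrightarrow> vanc par b c \<Longrightarrow> vanc par a c"
  unfolding vanc_def using funpow_comp by metis

lemma vanc_refl: "vanc par a a"
  unfolding vanc_def by (rule exI[of _ 0]) simp

lemma vanc_total:
  assumes "vanc par a b" "vanc par a c" shows "vanc par b c \<or> vanc par c b"
proof -
  obtain n m where n: "(par ^^ n) a = b" and m: "(par ^^ m) a = c"
    using assms unfolding vanc_def by auto
  show ?thesis
  proof (cases "n \<le> m")
    case True
    have "(par ^^ (m - n)) b = (par ^^ (m - n + n)) a" using n funpow_comp by metis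
    also have "m - n + n = m" using True by simp
    finally have "(par ^^ (m - n)) b = c" using m by simp
    then show ?thesis unfolding vanc_def by auto
  next
    case False
    have "(par ^^ (n - m)) c = (par ^^ (n - m + m)) a" using m funpow_comp by metis
    also have "n - m + m = n" using False by simp
    finally have "(par ^^ (n - m)) c = b" using n by simp
    then show ?thesis unfolding vanc_def by auto
  qed
qed

lemma L_eq:
  assumes MT: "merge_tree V r par f" and y: "y \<in> mt_points V r par f"
    and y': "y' \<in> mt_points V r par f"
    and va: "vanc par (fst y) (fst y')" and s: "snd y = snd y'"
  shows "y = y'"
proof -
  obtain k where k: "(par ^^ k) (fst y) = fst y'" using va unfolding vanc_def by auto
  show ?thesis
  proof (cases "k = 0")
    case True then show ?thesis using k s by (simp add: prod_eq_iff)
  next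
    case False
    show ?thesis
    proof (cases "fst y = r")
      case True
      then have "fst y' = r" using k funpow_r[OF MT] by simp
      then show ?thesis using True s by (simp add: prod_eq_iff)
    next
      case ne: False
      have lt: "snd y < f (par (fst y))" using pts(4)[OF MT y ne] .
      have le: "f (par (fst y)) \<le> f (fst y')"
        using f_par_le[OF MT pts(1)[OF MT y], of k] False k by simp
      show ?thesis
      proof (cases "fst y' = r")
        case True
        then have "snd y' = \<infinity>" using pts(2)[OF MT y'] by simp
        then show ?thesis using lt s by simp
      next
        case False
        then have "f (fst y') \<le> snd y'" using pts(3)[OF MT y'] by simp
        then show ?thesis using lt le s by simp
      qed
    qed
  qed
qed

lemma anc_unique:
  assumes MT: "merge_tree V r par f" and y: "y \<in> mt_points V r par f"
    and y': "y' \<in> mt_points V r par f"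
    and "mt_le par x y" "mt_le par x y'" "snd y = snd y'"
  shows "y = y'"
proof -
  have "vanc par (fst y) (fst y') \<or> vanc par (fst y') (fst y)"
    using assms(4,5) unfolding mt_le_def by (intro vanc_total[of par "fst x"]) simp_all
  then show ?thesis
  proof
    assume "vanc par (fst y) (fst y')"
    then show ?thesis using L_eq[OF MT y y'] assms(6) by blast
  next
    assume "vanc par (fst y') (fst y)"
    then have "y' = y" using L_eq[OF MT y' y] assms(6) by (simp only: eq_commute)
    then show ?thesis by (rule sym)
  qed
qed

lemma anc_exists:
  assumes MT: "merge_tree V r par f" and x: "x \<in> mt_points V r par f" and h: "snd x \<le> h"
  shows "\<exists>y\<in>mt_points V r par f. mt_le par x y \<and> snd y = h"
proof (cases "h = \<infinity>")
  case True
  obtain n where "(par ^^ n) (fst x) = r" using mt_basic(5)[OF MT pts(1)[OF MT x]] by auto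
  then have "mt_le par x (r, \<infinity>)" unfolding mt_le_def vanc_def by auto
  moreover have "(r, \<infinity>) \<in> mt_points V r par f" by (simp add: mt_points_def)
  ultimately show ?thesis using True by (intro bexI[of _ "(r, \<infinity>)"]) auto
next
  case hf: False
  have hlt: "h < \<infinity>" using hf by (cases h) auto
  obtain v where v_def: "fst x = v" by simp
  have vV: "v \<in> V" using pts(1)[OF MT x] v_def by simp
  define P where "P n \<longleftrightarrow> h < f (par ((par ^^ n) v))" for n
  obtain N where N: "(par ^^ N) v = r" using mt_basic(5)[OF MT vV] by auto
  have fr: "f r = \<infinity>" using mt_basic(6)[OF MT mt_basic(2)[OF MT]] by simp
  have "P N" unfolding P_def using hlt by (simp add: N mt_basic(3)[OF MT] fr)
  define n where "n = (LEAST n. P n)"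
  have Pn: "P n" unfolding n_def by (rule LeastI[of P N]) fact
  define w where "w = (par ^^ n) v"
  have wV: "w \<in> V" unfolding w_def using funpow_in[OF MT vV] .
  have fw: "f w \<le> h"
  proof (cases n)
    case 0
    have "v \<noteq> r"
    proof
      assume "v = r" then have "snd x = \<infinity>" using pts(2)[OF MT x] v_def by blast
      then show False using h hf by simp
    qed
    then have "f v \<le> snd x" using pts(3)[OF MT x] v_def by blast
    moreover have "w = v" using 0 w_def by simp
    ultimately show ?thesis using h by simp
  next
    case (Suc m)
    have "m < n" using Suc by simp
    then have "\<not> P m" unfolding n_def by (rule not_less_Least)
    then show ?thesis unfolding P_def w_def using Suc by simp
  qed
  have wr: "w \<noteq> r" using fw hlt fr by auto
  have "h < f (par w)" using Pn unfolding P_def w_def .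
  then have "(w, h) \<in> mt_points V r par f" unfolding mt_points_def
    using wV wr fw by simp
  moreover have "vanc par (fst x) w" unfolding vanc_def w_def v_def by blast
  then have "mt_le par x (w, h)" unfolding mt_le_def using h by simp
  ultimately show ?thesis by (intro bexI[of _ "(w, h)"]) auto
qed

lemma anc_char:
  assumes MT: "merge_tree V r par f" and x: "x \<in> mt_points V r par f" and h: "snd x \<le> h"
  shows "mt_anc V r par f h x \<in> mt_points V r par f \<and> mt_le par x (mt_anc V r par f h x)
     \<and> snd (mt_anc V r par f h x) = h"
proof -
  have "\<exists>!y. y \<in> mt_points V r par f \<and> mt_le par x y \<and> snd y = h"
    using anc_exists[OF MT x h] anc_unique[OF MT] by blast
  then show ?thesis unfolding mt_anc_def by (rule theI')
qed

lemma anc_eq: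
  assumes MT: "merge_tree V r par f" and x: "x \<in> mt_points V r par f"
    and y: "y \<in> mt_points V r par f" and "mt_le par x y" "snd y = h"
  shows "mt_anc V r par f h x = y"
proof -
  have h: "snd x \<le> h" using assms(4,5) unfolding mt_le_def by simp
  have c: "mt_anc V r par f h x \<in> mt_points V r par f" "mt_le par x (mt_anc V r par f h x)"
     "snd (mt_anc V r par f h x) = snd y" using anc_char[OF MT x h] assms(5) by auto
  show ?thesis by (rule anc_unique[OF MT c(1) y c(2) assms(4) c(3)])
qed

lemma mt_le_trans: "mt_le par x y \<Longrightarrow> mt_le par y z \<Longrightarrow> mt_le par x z"
  unfolding mt_le_def by (metis vanc_trans order_trans)

lemma mt_le_refl: "mt_le par x x"
  unfolding mt_le_def using vanc_refl by auto

lemma anc_comp: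
  assumes MT: "merge_tree V r par f" and x: "x \<in> mt_points V r par f"
    and "snd x \<le> h1" "h1 \<le> h2"
  shows "mt_anc V r par f h2 (mt_anc V r par f h1 x) = mt_anc V r par f h2 x"
proof -
  let ?a = "mt_anc V r par f h1 x"
  have a: "?a \<in> mt_points V r par f" "mt_le par x ?a" "snd ?a = h1"
    using anc_char[OF MT x assms(3)] by auto
  let ?b = "mt_anc V r par f h2 ?a"
  have b: "?b \<in> mt_points V r par f" "mt_le par ?a ?b" "snd ?b = h2"
    using anc_char[OF MT a(1)] a(3) assms(4) by auto
  show ?thesis using anc_eq[OF MT x b(1) mt_le_trans[OF a(2) b(2)] b(3)] by simp
qed

lemma leaf_below:
  assumes MT: "merge_tree V r par f" and l: "is_leaf V r par v" and vr: "v \<noteq> r"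
    and wV: "w \<in> V" and va: "vanc par w v"
  shows "w = v"
proof -
  obtain n where n: "(par ^^ n) w = v" using va unfolding vanc_def by auto
  show ?thesis
  proof (cases n)
    case 0 then show ?thesis using n by simp
  next
    case (Suc m)
    have "par ((par ^^ m) w) = v" using n Suc by simp
    moreover have "(par ^^ m) w \<in> V" using funpow_in[OF MT wV] .
    ultimately have "(par ^^ m) w = r" using l unfolding is_leaf_def by auto
    then show ?thesis using \<open>par ((par ^^ m) w) = v\<close> mt_basic(3)[OF MT] vr by simp
  qed
qed

lemma root_child:
  assumes MT: "merge_tree V r par f"
  shows "(par ^^ n) v = r \<Longrightarrow> v \<in> V \<Longrightarrow> v \<noteq> r \<Longrightarrow> \<exists>w\<in>V. w \<noteq> r \<and> par w = r"
proof (induction n arbitrary: v)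
  case 0 then show ?case by simp
next
  case (Suc n)
  have "(par ^^ n) (par v) = r" using Suc.prems(1) by (simp add: funpow_swap1)
  then show ?case using Suc mt_basic(4)[OF MT] by (cases "par v = r") auto
qed

lemma root_not_leaf:
  assumes MT: "merge_tree V r par f" shows "\<not> is_leaf V r par r"
proof -
  obtain l where l: "is_leaf V r par l" "f l = 0" using MT unfolding merge_tree_def by auto
  have lV: "l \<in> V" using l unfolding is_leaf_def by auto
  have "l \<noteq> r" using l mt_basic(6)[OF MT lV] by auto
  then obtain w where "w \<in> V" "w \<noteq> r" "par w = r"
    using root_child[OF MT _ lV] mt_basic(5)[OF MT lV] by metis
  then show ?thesis unfolding is_leaf_def by auto
qed

lemma leaf_facts:
  assumes MT: "merge_tree V r par f" and u: "u \<in> mt_leaves V r par f"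
  obtains v where "u = (v, f v)" "is_leaf V r par v" "v \<noteq> r" "v \<in> V"
    "u \<in> mt_points V r par f" "0 \<le> f v" "f v \<noteq> \<infinity>"
proof -
  obtain v where v: "u = (v, f v)" "is_leaf V r par v" using u unfolding mt_leaves_def by auto
  have vV: "v \<in> V" using v unfolding is_leaf_def by auto
  have vr: "v \<noteq> r" using v root_not_leaf[OF MT] by auto
  have "u \<in> mt_points V r par f" unfolding mt_points_def using v vV vr mt_basic(7)[OF MT vV vr]
    by auto
  moreover have "f v \<noteq> \<infinity>" using mt_basic(6)[OF MT vV] vr by simp
  ultimately show ?thesis using v vV vr mt_basic(8)[OF MT v(2)] by (intro that) auto
qed

lemma lca_char:
  assumes MT: "merge_tree V r par f" and u1: "u1 \<in> mt_leaves V r par f"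
    and u2: "u2 \<in> mt_leaves V r par f"
  shows "mt_lca V r par f u1 u2 \<in> mt_points V r par f \<and> mt_le par u1 (mt_lca V r par f u1 u2)
    \<and> mt_le par u2 (mt_lca V r par f u1 u2)"
proof -
  obtain v1 where v1: "u1 = (v1, f v1)" "v1 \<in> V" using leaf_facts[OF MT u1] by metis
  obtain v2 where v2: "u2 = (v2, f v2)" "v2 \<in> V" using leaf_facts[OF MT u2] by metis
  define W where "W = {w\<in>V. vanc par v1 w \<and> vanc par v2 w}"
  have rW: "r \<in> W" unfolding W_def vanc_def
    using mt_basic(2,5)[OF MT] v1 v2 by auto
  have fW: "finite W" unfolding W_def using mt_basic(1)[OF MT] by simp
  have "Min (f ` W) \<in> f ` W" using fW rW by (intro Min_in) auto
  then obtain w where wW: "w \<in> W" and wm: "f w = Min (f ` W)" by auto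
  have wmin: "f w \<le> f w'" if "w' \<in> W" for w'
    unfolding wm using fW that by (intro Min_le) auto
  have wV: "w \<in> V" and w1: "vanc par v1 w" and w2: "vanc par v2 w" using wW W_def by auto
  define z where "z = (if w = r then (r, \<infinity>) else (w, f w))"
  have zP: "z \<in> mt_points V r par f" unfolding z_def mt_points_def
    using wV mt_basic(7)[OF MT wV] by auto
  have fz: "fst z = w" "snd z = f w" unfolding z_def
    using mt_basic(6)[OF MT wV] by auto
  have up: "mt_le par (vi, f vi) z" if viV: "vi \<in> V" and viw: "vanc par vi w" for vi
  proof -
    obtain n where "(par ^^ n) vi = w" using viw unfolding vanc_def by auto
    then have "f vi \<le> f w" using f_mono[OF MT viV, of n] by simp
    then show ?thesis using viw fz unfolding mt_le_def by simp
  qed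
  have least: "mt_le par z z'" if z'P: "z' \<in> mt_points V r par f"
    and l1: "mt_le par u1 z'" and l2: "mt_le par u2 z'" for z'
  proof -
    have a1: "vanc par v1 (fst z')" using l1 v1(1) unfolding mt_le_def by simp
    have a2: "vanc par v2 (fst z')" using l2 v2(1) unfolding mt_le_def by simp
    have z'W: "fst z' \<in> W" using a1 a2 pts(1)[OF MT z'P] unfolding W_def by blast
    have "vanc par w (fst z')"
    proof -
      have "vanc par w (fst z') \<or> vanc par (fst z') w" using vanc_total[OF w1 a1] .
      moreover have False if t1: "vanc par (fst z') w" and t2: "\<not> vanc par w (fst z')"
      proof -
        obtain k where k: "(par ^^ k) (fst z') = w" using t1 unfolding vanc_def by auto
        have k0: "k > 0" using k t2 by (cases k) (auto simp: vanc_refl)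
        have ne: "fst z' \<noteq> r"
        proof
          assume "fst z' = r"
          then have "w = fst z'" using k funpow_r[OF MT] by simp
          then show False using t2 by (simp add: vanc_refl)
        qed
        have "f (fst z') < f (par (fst z'))" using mt_basic(7)[OF MT pts(1)[OF MT z'P] ne] .
        also have "\<dots> \<le> f w" using f_par_le[OF MT pts(1)[OF MT z'P] k0] k by simp
        finally show False using wmin[OF z'W] by simp
      qed
      ultimately show ?thesis by blast
    qed
    moreover have "snd z \<le> snd z'"
    proof (cases "fst z' = r")
      case True then show ?thesis using pts(2)[OF MT z'P] by simp
    next
      case False
      obtain k where k: "(par ^^ k) w = fst z'" using \<open>vanc par w (fst z')\<close> unfolding vanc_def by auto
      have "f w \<le> f (fst z')" using f_mono[OF MT wV, of k] k by simp
      then show ?thesis using pts(3)[OF MT z'P False] fz by simp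
    qed
    ultimately show ?thesis unfolding mt_le_def using fz by simp
  qed
  have u1z: "mt_le par u1 z" using up[OF v1(2) w1] v1(1) by simp
  have u2z: "mt_le par u2 z" using up[OF v2(2) w2] v2(1) by simp
  have ex: "z \<in> mt_points V r par f \<and> mt_le par u1 z \<and> mt_le par u2 z \<and>
      (\<forall>z'\<in>mt_points V r par f. mt_le par u1 z' \<and> mt_le par u2 z' \<longrightarrow> mt_le par z z')"
    using zP u1z u2z least by blast
  have uniq: "z1 = z2" if "z1 \<in> mt_points V r par f" "z2 \<in> mt_points V r par f"
    "mt_le par z1 z2" "mt_le par z2 z1" for z1 z2
  proof -
    have "snd z1 = snd z2" using that(3,4) unfolding mt_le_def by (simp add: antisym)
    moreover have "vanc par (fst z1) (fst z2)" using that(3) unfolding mt_le_def by simp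
    ultimately show ?thesis using L_eq[OF MT that(1,2)] by blast
  qed
  have "\<exists>!z. z \<in> mt_points V r par f \<and> mt_le par u1 z \<and> mt_le par u2 z \<and>
      (\<forall>z'\<in>mt_points V r par f. mt_le par u1 z' \<and> mt_le par u2 z' \<longrightarrow> mt_le par z z')"
    apply (rule ex1I[of _ z])
     apply (rule ex)
    using ex uniq by blast
  from theI'[OF this] show ?thesis unfolding mt_lca_def by auto
qed

theorem lemma3:
  fixes V :: "'v set" and r :: 'v and par :: "'v \<Rightarrow> 'v" and f :: "'v \<Rightarrow> ereal"
    and ord :: "real \<Rightarrow> 'v \<times> ereal \<Rightarrow> 'v \<times> ereal \<Rightarrow> bool"
  assumes "merge_tree V r par f"
    and "layer_order V r par f ord"
    and "u \<in> mt_leaves V r par f" and "u1 \<in> mt_leaves V r par f" and "u2 \<in> mt_leaves V r par f"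
    and "leaf_rel V r par f ord u1 u"
    and "leaf_rel V r par f ord u u2"
  shows "u \<in> mt_subtree V r par f (mt_lca V r par f u1 u2)"
proof -
  note MT = assms(1)
  let ?P = "mt_points V r par f"
  let ?anc = "mt_anc V r par f"
  obtain v where v: "u = (v, f v)" "is_leaf V r par v" "v \<noteq> r" "v \<in> V" "u \<in> ?P"
    "0 \<le> f v" "f v \<noteq> \<infinity>" using leaf_facts[OF MT assms(3)] by metis
  obtain v1 where v1: "u1 = (v1, f v1)" "u1 \<in> ?P" "0 \<le> f v1" "f v1 \<noteq> \<infinity>"
    using leaf_facts[OF MT assms(4)] by metis
  obtain v2 where v2: "u2 = (v2, f v2)" "u2 \<in> ?P" "0 \<le> f v2" "f v2 \<noteq> \<infinity>"
    using leaf_facts[OF MT assms(5)] by metis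
  define z where "z = mt_lca V r par f u1 u2"
  have z: "z \<in> ?P" "mt_le par u1 z" "mt_le par u2 z"
    using lca_char[OF MT assms(4,5)] z_def by auto
  show ?thesis unfolding z_def[symmetric] mt_subtree_def
  proof (simp add: v(5), rule ccontr)
    assume nle: "\<not> mt_le par u z"
    have zinf: "snd z \<noteq> \<infinity>"
    proof
      assume "snd z = \<infinity>"
      then have "fst z = r" using pts(4)[OF MT z(1)] by fastforce
      moreover obtain n where "(par ^^ n) v = r" using mt_basic(5)[OF MT v(4)] by auto
      ultimately have "mt_le par u z" unfolding mt_le_def vanc_def using v(1) \<open>snd z = \<infinity>\<close> by auto
      then show False using nle by simp
    qed
    have fz1: "f v1 \<le> snd z" and fz2: "f v2 \<le> snd z" using z v1 v2 unfolding mt_le_def by auto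
    define g where "g = max (snd z) (f v)"
    have g0: "0 \<le> g" using v(6) g_def by (simp add: le_max_iff_disj)
    have ginf: "g \<noteq> \<infinity>" using zinf v(7) g_def by (simp add: max_def)
    define gr where "gr = real_of_ereal g"
    have ggr: "ereal gr = g" using g0 ginf gr_def by (cases g) auto
    have gr0: "0 \<le> gr" using g0 ggr by (metis ereal_less_eq(5))
    define a where "a = ?anc g z"
    have a: "a \<in> ?P" "mt_le par z a" "snd a = g" using anc_char[OF MT z(1), of g] a_def g_def by auto
    have a1: "?anc g u1 = a" using anc_eq[OF MT v1(2) a(1) mt_le_trans[OF z(2) a(2)] a(3)] .
    have a2: "?anc g u2 = a" using anc_eq[OF MT v2(2) a(1) mt_le_trans[OF z(3) a(2)] a(3)] .
    define b where "b = ?anc g u"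
    have b: "b \<in> ?P" "mt_le par u b" "snd b = g" using anc_char[OF MT v(5), of g] b_def g_def v(1) by auto
    have ab: "a \<noteq> b"
    proof
      assume "a = b"
      show False
      proof (cases "f v \<le> snd z")
        case True
        then have "g = snd z" using g_def by simp
        then have "a = z" using anc_eq[OF MT z(1) z(1) mt_le_refl] a_def by simp
        then show False using nle b(2) \<open>a = b\<close> by simp
      next
        case False
        then have "g = f v" using g_def by simp
        then have "b = u" using anc_eq[OF MT v(5) v(5) mt_le_refl] b_def v(1) by simp
        then have "vanc par (fst z) v" using a(2) \<open>a = b\<close> v(1) unfolding mt_le_def by simp
        then have "fst z = v" using leaf_below[OF MT v(2) v(3) pts(1)[OF MT z(1)]] by simp
        then have "f v \<le> snd z" using pts(3)[OF MT z(1)] v(3) by simp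
        then show False using False by simp
      qed
    qed
    have push: "ord gr (?anc g x) (?anc g y)" if xP: "x \<in> ?P" and yP: "y \<in> ?P"
      and rel: "leaf_rel V r par f ord x y" and fx: "0 \<le> snd x" "snd x \<noteq> \<infinity>" "snd x \<le> g"
      and fy: "0 \<le> snd y" "snd y \<noteq> \<infinity>" "snd y \<le> g" for x y
    proof -
      define h where "h = max (snd x) (snd y)"
      define hr where "hr = real_of_ereal h"
      have h0: "0 \<le> h" using fx h_def by (simp add: le_max_iff_disj)
      have hinf: "h \<noteq> \<infinity>" using fx fy h_def by (simp add: max_def)
      have hhr: "ereal hr = h" using h0 hinf hr_def by (cases h) auto
      have hr0: "0 \<le> hr" using h0 hhr by (metis ereal_less_eq(5))
      have hleg: "h \<le> g" using h_def fx fy by simp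
      have hg: "hr \<le> gr" using hhr ggr hleg by (metis ereal_less_eq(3))
      have o: "ord hr (?anc h x) (?anc h y)" using rel unfolding leaf_rel_def Let_def h_def hr_def by simp
      have xl: "?anc h x \<in> mt_layer V r par f (ereal hr)"
        using anc_char[OF MT xP, of h] h_def hhr unfolding mt_layer_def by auto
      have yl: "?anc h y \<in> mt_layer V r par f (ereal hr)"
        using anc_char[OF MT yP, of h] h_def hhr unfolding mt_layer_def by auto
      have "ord gr (?anc (ereal gr) (?anc h x)) (?anc (ereal gr) (?anc h y))"
        using assms(2) hr0 hg xl yl o unfolding layer_order_def by blast
      moreover have "?anc g (?anc h x) = ?anc g x"
        using anc_comp[OF MT xP _ hleg] h_def by simp
      moreover have "?anc g (?anc h y) = ?anc g y"
        using anc_comp[OF MT yP _ hleg] h_def by simp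
      ultimately show ?thesis using ggr by simp
    qed
    have gz: "snd z \<le> g" "f v \<le> g" unfolding g_def by simp_all
    have su: "0 \<le> snd u" "snd u \<noteq> \<infinity>" "snd u \<le> g" using v(1,6,7) gz by simp_all
    have su1: "0 \<le> snd u1" "snd u1 \<noteq> \<infinity>" "snd u1 \<le> g" using v1(1,3,4) fz1 gz by simp_all
    have su2: "0 \<le> snd u2" "snd u2 \<noteq> \<infinity>" "snd u2 \<le> g" using v2(1,3,4) fz2 gz by simp_all
    have o1: "ord gr a b" using push[OF v1(2) v(5) assms(6) su1 su] a1 b_def by simp
    have o2: "ord gr b a" using push[OF v(5) v2(2) assms(7) su su2] a2 b_def by simp
    have "a \<in> mt_layer V r par f (ereal gr)" "b \<in> mt_layer V r par f (ereal gr)"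
      using a b ggr unfolding mt_layer_def by auto
    then have "a = b" using assms(2) gr0 o1 o2 unfolding layer_order_def total_order_on_def by blast
    then show False using ab by simp
  qed
qed

end
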